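(* For every $\varepsilon>0$ and every integer $s\ge1$ there exists a $d$-regular $K_{s+2}$-saturated graph on $n$ vertices with $d/n<\varepsilon$. Moreover, for every integer $s\ge 1$ there exists an infinite sequence of graphs $F_m$, where $F_m$ is $d_m$-regular, $K_{s+2}$-saturated and has $n_m$ vertices, such that $\frac{d_m}{n_m}=O_s\!\left(\frac{(\log\log n_m)^2}{\log n_m}\right)$.
   Context: All graphs are finite and simple. For a graph $F$, a graph $G$ is $F$-saturated if $G$ contains no copy of $F$, but adding any edge between two non-adjacent vertices of $G$ creates a copy of $F$. $K_r$ denotes the complete graph on $r$ vertices. $O_s$ means the implied constant may depend on $s$. *)

theory Defs
  imports Complex_Main
begin

definition simple_graph :: "'a set \<Rightarrow> ('a \<Rightarrow> 'a \<Rightarrow> bool) \<Rightarrow> bool" where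
  "simple_graph V E \<longleftrightarrow> finite V \<and> (\<forall>x y. E x y \<longrightarrow> x \<in> V \<and> y \<in> V)
     \<and> (\<forall>x y. E x y \<longrightarrow> E y x) \<and> (\<forall>x. \<not> E x x)"

definition degree :: "'a set \<Rightarrow> ('a \<Rightarrow> 'a \<Rightarrow> bool) \<Rightarrow> 'a \<Rightarrow> nat" where
  "degree V E v = card {u \<in> V. E v u}"

definition regular :: "'a set \<Rightarrow> ('a \<Rightarrow> 'a \<Rightarrow> bool) \<Rightarrow> nat \<Rightarrow> bool" where
  "regular V E d \<longleftrightarrow> (\<forall>v\<in>V. degree V E v = d)"

definition has_clique :: "'a set \<Rightarrow> ('a \<Rightarrow> 'a \<Rightarrow> bool) \<Rightarrow> nat \<Rightarrow> bool" where
  "has_clique V E r \<longleftrightarrow> (\<exists>S. S \<subseteq> V \<and> card S = r \<and> (\<forall>x\<in>S. \<forall>y\<in>S. x \<noteq> y \<longrightarrow> E x y))"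

definition add_edge :: "('a \<Rightarrow> 'a \<Rightarrow> bool) \<Rightarrow> 'a \<Rightarrow> 'a \<Rightarrow> ('a \<Rightarrow> 'a \<Rightarrow> bool)" where
  "add_edge E x y = (\<lambda>u v. E u v \<or> (u = x \<and> v = y) \<or> (u = y \<and> v = x))"

definition K_saturated :: "'a set \<Rightarrow> ('a \<Rightarrow> 'a \<Rightarrow> bool) \<Rightarrow> nat \<Rightarrow> bool" where
  "K_saturated V E r \<longleftrightarrow> \<not> has_clique V E r \<and>
     (\<forall>x\<in>V. \<forall>y\<in>V. x \<noteq> y \<and> \<not> E x y \<longrightarrow> has_clique V (add_edge E x y) r)"

end

theory Submission
  imports Defs "HOL-Library.Nat_Bijection"
begin


definition KV :: "nat \<Rightarrow> nat \<Rightarrow> nat set" where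
  "KV m r = set_encode ` {A. A \<subseteq> {..<m} \<and> card A = r}"

definition KE :: "nat \<Rightarrow> nat \<Rightarrow> nat \<Rightarrow> nat \<Rightarrow> bool" where
  "KE m r x y = (x \<in> KV m r \<and> y \<in> KV m r \<and> set_decode x \<inter> set_decode y = {})"

lemma KV_iff: "x \<in> KV m r \<longleftrightarrow> set_decode x \<subseteq> {..<m} \<and> card (set_decode x) = r"
proof
  assume "x \<in> KV m r"
  then obtain A where "A \<subseteq> {..<m}" "card A = r" "x = set_encode A" unfolding KV_def by auto
  moreover have "finite A" using \<open>A \<subseteq> {..<m}\<close> finite_subset by blast
  ultimately show "set_decode x \<subseteq> {..<m} \<and> card (set_decode x) = r" by simp
next
  assume "set_decode x \<subseteq> {..<m} \<and> card (set_decode x) = r"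
  then show "x \<in> KV m r" unfolding KV_def
    by (metis (mono_tags, lifting) image_iff mem_Collect_eq set_decode_inverse)
qed

lemma inj_enc: "inj_on set_encode {A. A \<subseteq> {..<m} \<and> P A}"
  by (rule inj_on_subset[OF inj_on_set_encode]) (auto intro: finite_subset)

lemma card_KV: "card (KV m r) = m choose r"
proof -
  have "card (KV m r) = card {A. A \<subseteq> {..<m} \<and> card A = r}"
    unfolding KV_def by (rule card_image[OF inj_enc])
  also have "\<dots> = m choose r" by (simp add: n_subsets)
  finally show ?thesis .
qed

lemma finite_KV: "finite (KV m r)"
  unfolding KV_def by simp

lemma KV_sg: "0 < r \<Longrightarrow> simple_graph (KV m r) (KE m r)"
  unfolding simple_graph_def using finite_KV
  by (auto simp: KE_def KV_iff)

lemma KV_reg: "regular (KV m r) (KE m r) ((m - r) choose r)"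
  unfolding regular_def degree_def
proof
  fix x assume x: "x \<in> KV m r"
  let ?A = "set_decode x"
  have A: "?A \<subseteq> {..<m}" "card ?A = r" using x by (auto simp: KV_iff)
  have "{u \<in> KV m r. KE m r x u} = set_encode ` {B. B \<subseteq> {..<m} - ?A \<and> card B = r}"
  proof (rule set_eqI, rule iffI)
    fix u assume "u \<in> {u \<in> KV m r. KE m r x u}"
    then have "set_decode u \<in> {B. B \<subseteq> {..<m} - ?A \<and> card B = r}" "u = set_encode (set_decode u)"
      by (auto simp: KE_def KV_iff)
    then show "u \<in> set_encode ` {B. B \<subseteq> {..<m} - ?A \<and> card B = r}" by blast
  next
    fix u assume "u \<in> set_encode ` {B. B \<subseteq> {..<m} - ?A \<and> card B = r}"
    then obtain B where B: "B \<subseteq> {..<m} - ?A" "card B = r" "u = set_encode B" by auto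
    have "finite B" using B(1) finite_subset by blast
    then show "u \<in> {u \<in> KV m r. KE m r x u}" using B x
      by (auto simp: KE_def KV_iff)
  qed
  also have "card \<dots> = card {B. B \<subseteq> {..<m} - ?A \<and> card B = r}"
    by (rule card_image, rule inj_on_subset[OF inj_enc[of m "\<lambda>_. True"]]) auto
  also have "\<dots> = card ({..<m} - ?A) choose r" by (simp add: n_subsets)
  also have "card ({..<m} - ?A) = m - r" using A by (simp add: card_Diff_subset finite_subset)
  finally show "card {u \<in> KV m r. KE m r x u} = (m - r) choose r" .
qed

lemma KV_noclique:
  assumes "m < k * r"
  shows "\<not> has_clique (KV m r) (KE m r) k"
proof
  assume "has_clique (KV m r) (KE m r) k"
  then obtain S where S: "S \<subseteq> KV m r" "card S = k" "\<forall>x\<in>S. \<forall>y\<in>S. x \<noteq> y \<longrightarrow> KE m r x y"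
    unfolding has_clique_def by blast
  have inj: "inj_on set_decode S"
  proof (rule inj_onI)
    fix a b assume "set_decode a = set_decode b"
    then have "set_encode (set_decode a) = set_encode (set_decode b)" by simp
    then show "a = b" by simp
  qed
  have pw: "pairwise disjnt (set_decode ` S)"
    unfolding pairwise_def
  proof (intro ballI impI)
    fix X Y assume X: "X \<in> set_decode ` S" and Y: "Y \<in> set_decode ` S" and XY: "X \<noteq> Y"
    obtain a where a: "a \<in> S" "X = set_decode a" using X by blast
    obtain b where b: "b \<in> S" "Y = set_decode b" using Y by blast
    have "a \<noteq> b" using XY a(2) b(2) by blast
    then have "KE m r a b" using S(3) a(1) b(1) by blast
    then show "disjnt X Y" unfolding disjnt_def KE_def a(2) b(2) by blast
  qed
  have "card (\<Union>(set_decode ` S)) = sum card (set_decode ` S)"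
    by (rule card_Union_disjoint[OF pw]) auto
  also have "\<dots> = sum (\<lambda>x. card (set_decode x)) S" by (rule sum.reindex[OF inj, unfolded comp_def])
  also have "\<dots> = k * r" using S(1,2) by (simp add: KV_iff subset_iff)
  finally have eq: "card (\<Union>(set_decode ` S)) = k * r" .
  have "\<Union>(set_decode ` S) \<subseteq> {..<m}"
  proof
    fix z assume "z \<in> \<Union>(set_decode ` S)"
    then obtain a where a: "a \<in> S" "z \<in> set_decode a" by blast
    have "a \<in> KV m r" using S(1) a(1) by blast
    then have "set_decode a \<subseteq> {..<m}" by (simp add: KV_iff)
    then show "z \<in> {..<m}" using a(2) by blast
  qed
  then have "card (\<Union>(set_decode ` S)) \<le> m" by (metis card_lessThan card_mono finite_lessThan)
  with eq assms show False by simp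
qed

lemma disj_family:
  assumes "finite R" "s * r \<le> card R" "0 < r"
  shows "\<exists>F. card F = s \<and> (\<forall>C\<in>F. C \<subseteq> R \<and> card C = r) \<and> pairwise disjnt F"
  using assms
proof (induction s arbitrary: R)
  case 0 then show ?case by (intro exI[of _ "{}"]) auto
next
  case (Suc s)
  obtain C where C: "C \<subseteq> R" "card C = r" "finite C"
    using obtain_subset_with_card_n[of r R] Suc.prems by auto
  have "card (R - C) = card R - r" using C Suc.prems by (simp add: card_Diff_subset)
  then have "s * r \<le> card (R - C)" using Suc.prems by simp
  then obtain F where F: "card F = s" "\<forall>D\<in>F. D \<subseteq> R - C \<and> card D = r" "pairwise disjnt F"
    using Suc.IH[of "R - C"] Suc.prems by auto
  have F': "\<forall>D\<in>F. D \<subseteq> R - C \<and> card D = r" using F(2) by simp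
  have "C \<notin> F"
  proof
    assume "C \<in> F"
    then have "C \<subseteq> R - C" using F' by blast
    then have "C = {}" by blast
    then show False using C Suc.prems by simp
  qed
  have finF: "finite F" using F' Suc.prems(1) by (meson Diff_subset PowI finite_Pow_iff finite_subset subset_iff)
  show ?case
  proof (intro exI[of _ "insert C F"] conjI)
    show "card (insert C F) = Suc s" using \<open>C \<notin> F\<close> F(1) finF by simp
    show "\<forall>D\<in>insert C F. D \<subseteq> R \<and> card D = r" using C F' by auto
    show "pairwise disjnt (insert C F)" using F(3) F'
      unfolding pairwise_def disjnt_def by auto
  qed
qed

lemma KV_sat:
  assumes "(s + 2) * r \<le> m + 1" "0 < r" "x \<in> KV m r" "y \<in> KV m r" "x \<noteq> y" "\<not> KE m r x y"
  shows "has_clique (KV m r) (add_edge (KE m r) x y) (s + 2)"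
proof -
  let ?A = "set_decode x" and ?B = "set_decode y"
  have A: "?A \<subseteq> {..<m}" "card ?A = r" and B: "?B \<subseteq> {..<m}" "card ?B = r"
    using assms(3,4) by (auto simp: KV_iff)
  have AB: "?A \<inter> ?B \<noteq> {}" using assms(3,4,6) by (simp add: KE_def)
  have AneB: "?A \<noteq> ?B" using assms(5) by (metis set_decode_inverse)
  have fA: "finite ?A" "finite ?B" by simp_all
  have "card (?A \<union> ?B) = card ?A + card ?B - card (?A \<inter> ?B)"
    using card_Un_Int[OF fA] by simp
  moreover have "card (?A \<inter> ?B) \<ge> 1" using AB fA by (simp add: Suc_leI card_gt_0_iff)
  ultimately have cU: "card (?A \<union> ?B) \<le> 2 * r - 1" using A B by simp
  let ?R = "{..<m} - (?A \<union> ?B)"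
  have "card ?R = m - card (?A \<union> ?B)" using A B by (simp add: card_Diff_subset)
  then have "s * r \<le> card ?R" using cU assms(1,2) by (simp add: algebra_simps)
  then obtain F where F: "card F = s" "\<forall>C\<in>F. C \<subseteq> ?R \<and> card C = r" "pairwise disjnt F"
    using disj_family[of ?R s r] assms(2) by auto
  have finF: "finite F" using F(2)
    by (meson PowI finite_Diff finite_Pow_iff finite_lessThan finite_subset subset_iff)
  have ne: "\<forall>C\<in>F. C \<noteq> {}" using F(2) assms(2) by auto
  have Ane: "?A \<noteq> {}" "?B \<noteq> {}" using A(2) B(2) assms(2) by auto
  have AF: "?A \<notin> F" "?B \<notin> F"
  proof
    assume "?A \<in> F" then have "?A \<subseteq> ?R" using F(2) by blast
    then show False using Ane by blast
  next
    show "?B \<notin> F"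
    proof
      assume "?B \<in> F" then have "?B \<subseteq> ?R" using F(2) by blast
      then show False using Ane by blast
    qed
  qed
  let ?G = "insert ?A (insert ?B F)"
  have cG: "card ?G = s + 2" using AF AneB F(1) finF by simp
  have finG: "\<forall>C\<in>?G. finite C" using F(2) by (auto intro: finite_subset)
  let ?S = "set_encode ` ?G"
  have injG: "inj_on set_encode ?G"
    by (rule inj_on_subset[OF inj_on_set_encode]) (use finG in auto)
  show ?thesis unfolding has_clique_def
  proof (intro exI[of _ ?S] conjI)
    have Gs: "\<forall>C\<in>?G. C \<subseteq> {..<m} \<and> card C = r" using F(2) A B by auto
    show SK: "?S \<subseteq> KV m r"
    proof
      fix u assume "u \<in> ?S"
      then obtain C where C: "C \<in> ?G" "u = set_encode C" by blast
      have "finite C" using finG C(1) by blast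
      then have dC: "set_decode u = C" using C(2) by simp
      have "C \<subseteq> {..<m} \<and> card C = r" using Gs C(1) by blast
      then show "u \<in> KV m r" unfolding KV_iff dC .
    qed
    show "card ?S = s + 2" using card_image[OF injG] cG by simp
    show "\<forall>u\<in>?S. \<forall>v\<in>?S. u \<noteq> v \<longrightarrow> add_edge (KE m r) x y u v"
    proof (intro ballI impI)
      fix u v assume u: "u \<in> ?S" and v: "v \<in> ?S" and uv: "u \<noteq> v"
      have uK: "u \<in> KV m r" and vK: "v \<in> KV m r"
        using subsetD[OF SK u] subsetD[OF SK v] by auto
      obtain U where U: "U \<in> ?G" "u = set_encode U" using u by blast
      obtain W where W: "W \<in> ?G" "v = set_encode W" using v by blast
      have "finite U" using finG U(1) by blast
      then have dU: "set_decode u = U" using U(2) by simp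
      have "finite W" using finG W(1) by blast
      then have dW: "set_decode v = W" using W(2) by simp
      have UW: "U \<noteq> W" using uv U(2) W(2) by blast
      show "add_edge (KE m r) x y u v"
      proof (cases "{U, W} = {?A, ?B}")
        case True
        then have "(U = ?A \<and> W = ?B) \<or> (U = ?B \<and> W = ?A)" by (simp only: doubleton_eq_iff)
        then have "(set_decode u = ?A \<and> set_decode v = ?B) \<or> (set_decode u = ?B \<and> set_decode v = ?A)"
          unfolding dU dW .
        then have "(u = x \<and> v = y) \<or> (u = y \<and> v = x)" by (metis set_decode_inverse)
        then show ?thesis unfolding add_edge_def by blast
      next
        case False
        have "U \<inter> W = {}"
        proof -
          { assume "U \<in> F" "W \<in> F" then have ?thesis using F(3) UW
              unfolding pairwise_def disjnt_def by blast }
          moreover { assume "U \<in> F" then have "U \<inter> (?A \<union> ?B) = {}" using F(2) by blast }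
          moreover { assume "W \<in> F" then have "W \<inter> (?A \<union> ?B) = {}" using F(2) by blast }
          ultimately show ?thesis using U(1) W(1) False UW by blast
        qed
        then have "KE m r u v" unfolding KE_def dU dW using uK vK by blast
        then show ?thesis unfolding add_edge_def by blast
      qed
    qed
  qed
qed



lemma choose_step: "(n choose Suc r) * Suc r = (n choose r) * (n - r)"
proof (cases n)
  case 0 then show ?thesis by simp
next
  case (Suc n')
  have "Suc r * (Suc n' choose Suc r) = Suc n' * (n' choose r)" by (rule Suc_times_binomial)
  moreover have "(Suc n' - r) * (Suc n' choose r) = Suc n' * ((Suc n' - 1) choose r)"
    by (rule binomial_absorb_comp)
  ultimately show ?thesis using Suc by (simp add: mult.commute)
qed

lemma choose_step_real: "real (n choose Suc r) * (r + 1) = real (n choose r) * (real n - r)"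
proof (cases "r \<le> n")
  case True
  have "real ((n choose Suc r) * Suc r) = real ((n choose r) * (n - r))" using choose_step by metis
  then show ?thesis using True by (simp add: of_nat_diff algebra_simps)
next
  case False then show ?thesis by (simp add: binomial_eq_0)
qed

lemma choose_ratio:
  assumes "a \<le> b"
  shows "real (a choose r) * real b ^ r \<le> real (b choose r) * real a ^ r"
proof (induction r)
  case 0 then show ?case by simp
next
  case (Suc r)
  show ?case
  proof (cases "r \<le> a")
    case False
    then have z: "a choose Suc r = 0" by (simp add: binomial_eq_0)
    show ?thesis by (subst z) simp
  next
    case True
    have e1: "real (a choose Suc r) * (r + 1) = real (a choose r) * (real a - r)" by (rule choose_step_real)
    have e2: "real (b choose Suc r) * (r + 1) = real (b choose r) * (real b - r)" by (rule choose_step_real)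
    have "real (a choose Suc r) * real b ^ Suc r * (r+1) = (real (a choose Suc r) * (r + 1)) * (real b ^ r * b)"
      by (simp add: algebra_simps)
    also have "\<dots> = real (a choose r) * (real a - r) * (real b ^ r * b)" by (simp only: e1)
    also have "\<dots> = real (a choose r) * real b ^ r * ((real a - r) * b)" by (simp add: algebra_simps)
    also have "\<dots> \<le> real (b choose r) * real a ^ r * ((real a - r) * b)"
      using Suc.IH True by (intro mult_right_mono) auto
    also have "\<dots> \<le> real (b choose r) * real a ^ r * ((real b - r) * a)"
      using True assms by (intro mult_left_mono) (auto simp: algebra_simps intro: mult_right_mono)
    also have "\<dots> = real (b choose r) * (real b - r) * (real a ^ r * a)" by (simp add: algebra_simps)
    also have "\<dots> = (real (b choose Suc r) * (r + 1)) * (real a ^ r * a)" by (simp only: e2)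
    also have "\<dots> = real (b choose Suc r) * real a ^ Suc r * (r+1)" by (simp add: algebra_simps)
    finally have "real (a choose Suc r) * real b ^ Suc r * real (r+1) \<le> real (b choose Suc r) * real a ^ Suc r * real (r+1)" .
    then show ?thesis by (rule mult_right_le_imp_le) simp
  qed
qed
lemma dens_aux:
  fixes x :: real and r :: nat
  assumes "x > 0" "r \<ge> 1"
  shows "(x / (x + r)) ^ r \<le> x / (real r)^2"
proof -
  have "real r / x \<ge> 0" using assms by simp
  then have "-1 \<le> real r / x" by linarith
  then have "1 + real r * (real r / x) \<le> (1 + real r / x) ^ r"
    using Bernoulli_inequality[of "real r / x" r] by simp
  also have "1 + real r / x = (x + r) / x" using assms by (simp add: field_simps)
  finally have B: "(real r)^2 / x \<le> ((x + r) / x) ^ r"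
    using assms by (simp add: power2_eq_square)
  have pos: "(real r)^2 / x > 0" using assms by simp
  have "(x / (x + r)) ^ r = 1 / ((x + r) / x) ^ r" using assms by (simp add: power_divide)
  also have "\<dots> \<le> 1 / ((real r)^2 / x)"
    using B pos assms by (intro divide_left_mono) auto
  also have "\<dots> = x / (real r)^2" by simp
  finally show ?thesis .
qed

lemma density:
  assumes "1 \<le> r" "1 \<le> s" "b = (s + 2) * r - 1"
  shows "real ((b - r) choose r) / real (b choose r) \<le> real (s + 1) / real r"
proof -
  define a where "a = b - r"
  have "(s+2)*r = (s+1)*r + r" by (simp add: algebra_simps)
  moreover have "(s+1)*r \<ge> 2*r" using assms by simp
  ultimately have ab0: "a = (s+1)*r - 1" "b = a + r" "a \<ge> 1"
    using assms unfolding a_def by linarith+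
  have "a \<le> (s+1)*r" using ab0 by simp
  then have "real a \<le> real ((s+1)*r)" by (simp only: of_nat_le_iff)
  then have a4: "real a \<le> real (s+1) * real r" by (simp only: of_nat_mult)
  have ab: "a \<le> b" "b = a + r" "a \<ge> 1" "real a \<le> real (s+1) * r"
    using ab0(2,3) a4 by auto
  have bpos: "real (b choose r) > 0" using ab by simp
  have bp: "real b > 0" using ab by simp
  have "real (a choose r) / real (b choose r) \<le> real a ^ r / real b ^ r"
    using choose_ratio[OF ab(1), of r] bpos bp by (simp add: divide_simps mult.commute)
  also have "\<dots> = (real a / (real a + r)) ^ r" using ab by (simp add: power_divide)
  also have "\<dots> \<le> real a / (real r)^2" by (rule dens_aux) (use ab assms in auto)
  also have "\<dots> \<le> real (s+1) * r / (real r)^2" using ab by (intro divide_right_mono) auto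
  also have "\<dots> = real (s+1) / r" by (simp add: power2_eq_square)
  finally show ?thesis unfolding a_def .
qed

lemma choose_mono_top: "n \<le> n' \<Longrightarrow> (n choose k) \<le> (n' choose k)"
proof (induction n' rule: dec_induct)
  case base then show ?case by simp
next
  case (step n')
  have "(n' choose k) \<le> (Suc n' choose k)"
    by (cases k) auto
  then show ?case using step.IH by simp
qed

lemma card_strict:
  assumes "1 \<le> s" "1 \<le> r"
  shows "((s+2)*r - 1) choose r < ((s+2)*(Suc r) - 1) choose (Suc r)"
proof -
  let ?b = "(s+2)*r - 1"
  have b1: "(s+2)*(Suc r) - 1 \<ge> Suc ?b" using assms by (simp add: algebra_simps)
  have "Suc ?b choose Suc r = (?b choose r) + (?b choose Suc r)" by simp
  moreover have "Suc r \<le> ?b"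
  proof -
    have "(s+2)*r \<ge> 3*r" using assms by simp
    then show ?thesis using assms by linarith
  qed
  then have "(?b choose Suc r) > 0" by simp
  ultimately have "?b choose r < Suc ?b choose Suc r" by linarith
  also have "\<dots> \<le> ((s+2)*(Suc r) - 1) choose (Suc r)" by (rule choose_mono_top[OF b1])
  finally show ?thesis .
qed

lemma ln_choose_le: "1 \<le> r \<Longrightarrow> r \<le> b \<Longrightarrow> ln (real (b choose r)) \<le> real b"
proof -
  assume "1 \<le> r" "r \<le> b"
  then have pos: "real (b choose r) > 0" by simp
  have "real (b choose r) \<le> real (2 ^ b)" using binomial_le_pow2[of b r]
    by (simp only: of_nat_le_iff)
  then have "real (b choose r) \<le> 2 ^ b" by simp
  then have "ln (real (b choose r)) \<le> ln (2 ^ b)" using pos by simp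
  also have "\<dots> = real b * ln 2" by (simp add: ln_realpow)
  also have "\<dots> \<le> real b" using ln_2_less_1 by (simp add: mult_left_le)
  finally show ?thesis .
qed

theorem theorem1p3:
  shows "(\<forall>\<epsilon>::real. \<epsilon> > 0 \<longrightarrow> (\<forall>s::nat. s \<ge> 1 \<longrightarrow>
            (\<exists>(V::nat set) E d. simple_graph V E \<and> regular V E d \<and> K_saturated V E (s + 2)
               \<and> (\<exists>x\<in>V. \<exists>y\<in>V. x \<noteq> y \<and> \<not> E x y)
               \<and> real d / real (card V) < \<epsilon>)))
       \<and> (\<forall>s::nat. s \<ge> 1 \<longrightarrow>
            (\<exists>(V::nat \<Rightarrow> nat set) (E::nat \<Rightarrow> nat \<Rightarrow> nat \<Rightarrow> bool) (d::nat \<Rightarrow> nat).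
               (\<forall>m. simple_graph (V m) (E m) \<and> regular (V m) (E m) (d m)
                     \<and> K_saturated (V m) (E m) (s + 2))
               \<and> strict_mono (\<lambda>m. card (V m))
               \<and> (\<exists>C::real. \<exists>M. \<forall>m\<ge>M.
                    real (d m) / real (card (V m))
                      \<le> C * (ln (ln (real (card (V m)))))\<^sup>2 / ln (real (card (V m))))))"
proof (intro conjI allI impI)
  fix \<epsilon> :: real and s :: nat
  assume eps: "\<epsilon> > 0" and s1: "1 \<le> s"
  obtain N :: nat where N: "real (s+1) / \<epsilon> < N" using reals_Archimedean2 by blast
  define r where "r = N + 2"
  define b where "b = (s+2)*r - 1"
  have r2: "r \<ge> 2" unfolding r_def by simp
  have rb: "r < b"
  proof -
    have "(s+2)*r \<ge> 3*r" using s1 by simp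
    then show ?thesis unfolding b_def using r2 by linarith
  qed
  have sat: "K_saturated (KV b r) (KE b r) (s+2)"
    unfolding K_saturated_def
  proof (intro conjI ballI impI)
    show "\<not> has_clique (KV b r) (KE b r) (s + 2)"
      by (rule KV_noclique) (use r2 in \<open>simp add: b_def\<close>)
  next
    fix x y assume "x \<in> KV b r" "y \<in> KV b r" "x \<noteq> y \<and> \<not> KE b r x y"
    then show "has_clique (KV b r) (add_edge (KE b r) x y) (s + 2)"
      using KV_sat[of s r b x y] r2 by (simp add: b_def)
  qed
  let ?x = "set_encode {..<r}" and ?y = "set_encode {1..r}"
  have nonedge: "\<exists>x\<in>KV b r. \<exists>y\<in>KV b r. x \<noteq> y \<and> \<not> KE b r x y"
  proof -
    have "?x \<in> KV b r" using rb by (auto simp: KV_iff)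
    have "?y \<in> KV b r" using rb by (auto simp: KV_iff)
    have dx: "set_decode ?x = {..<r}" by (rule set_encode_inverse) simp
    have dy: "set_decode ?y = {1..r}" by (rule set_encode_inverse) simp
    have "{..<r} \<noteq> {1..r}"
    proof
      assume "{..<r} = {1..r}"
      moreover have "(0::nat) \<in> {..<r}" using r2 by simp
      ultimately show False by simp
    qed
    then have "set_decode ?x \<noteq> set_decode ?y" using dx dy by metis
    then have "?x \<noteq> ?y" by metis
    have "(1::nat) \<in> {..<r} \<inter> {1..r}" using r2 by simp
    then have "set_decode ?x \<inter> set_decode ?y \<noteq> {}" using dx dy by (metis empty_iff)
    then have "\<not> KE b r ?x ?y" by (simp only: KE_def) blast
    then show ?thesis using \<open>?x \<in> KV b r\<close> \<open>?y \<in> KV b r\<close> \<open>?x \<noteq> ?y\<close> by blast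
  qed
  have "real ((b - r) choose r) / real (card (KV b r)) \<le> real (s+1) / real r"
    unfolding card_KV by (rule density) (use r2 s1 in \<open>auto simp: b_def\<close>)
  also have "\<dots> < \<epsilon>"
  proof -
    have "real (s+1) < \<epsilon> * N" using N eps by (simp add: field_simps)
    also have "\<dots> \<le> \<epsilon> * r" using eps unfolding r_def by simp
    finally show ?thesis using r2 by (simp add: field_simps)
  qed
  finally have dens: "real ((b - r) choose r) / real (card (KV b r)) < \<epsilon>" .
  show "\<exists>(V::nat set) E d. simple_graph V E \<and> regular V E d \<and> K_saturated V E (s + 2)
               \<and> (\<exists>x\<in>V. \<exists>y\<in>V. x \<noteq> y \<and> \<not> E x y)
               \<and> real d / real (card V) < \<epsilon>"
  proof (intro exI[of _ "KV b r"] exI[of _ "KE b r"] exI[of _ "(b - r) choose r"] conjI)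
    show "simple_graph (KV b r) (KE b r)" by (rule KV_sg) (use r2 in simp)
    show "regular (KV b r) (KE b r) ((b - r) choose r)" by (rule KV_reg)
  qed (use sat nonedge dens in auto)
next
  fix s :: nat assume s1: "1 \<le> s"
  define bb where "bb r = (s+2)*r - 1" for r
  define V where "V m = KV (bb (Suc m)) (Suc m)" for m
  define E where "E m = KE (bb (Suc m)) (Suc m)" for m
  define d where "d m = (bb (Suc m) - Suc m) choose (Suc m)" for m
  have cardV: "card (V m) = bb (Suc m) choose Suc m" for m unfolding V_def by (rule card_KV)
  have props: "simple_graph (V m) (E m) \<and> regular (V m) (E m) (d m) \<and> K_saturated (V m) (E m) (s + 2)" for m
  proof (intro conjI)
    show "simple_graph (V m) (E m)" unfolding V_def E_def by (rule KV_sg) simp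
    show "regular (V m) (E m) (d m)" unfolding V_def E_def d_def by (rule KV_reg)
    show "K_saturated (V m) (E m) (s + 2)"
      unfolding K_saturated_def V_def E_def
    proof (intro conjI ballI impI)
      show "\<not> has_clique (KV (bb (Suc m)) (Suc m)) (KE (bb (Suc m)) (Suc m)) (s + 2)"
        by (rule KV_noclique) (simp add: bb_def)
    next
      fix x y assume "x \<in> KV (bb (Suc m)) (Suc m)" "y \<in> KV (bb (Suc m)) (Suc m)"
        "x \<noteq> y \<and> \<not> KE (bb (Suc m)) (Suc m) x y"
      then show "has_clique (KV (bb (Suc m)) (Suc m)) (add_edge (KE (bb (Suc m)) (Suc m)) x y) (s + 2)"
        using KV_sat[of s "Suc m" "bb (Suc m)" x y] by (simp add: bb_def)
    qed
  qed
  have sm: "strict_mono (\<lambda>m. card (V m))"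
    unfolding strict_mono_Suc_iff
  proof
    fix n
    show "card (V n) < card (V (Suc n))"
      unfolding cardV bb_def by (rule card_strict[OF s1]) simp
  qed
  have bound: "\<forall>m\<ge>27. real (d m) / real (card (V m))
       \<le> real ((s+1)*(s+2)) * (ln (ln (real (card (V m)))))\<^sup>2 / ln (real (card (V m)))"
  proof (intro allI impI)
    fix m :: nat assume m27: "m \<ge> 27"
    define n where "n = card (V m)"
    define r where "r = Suc m"
    have "n \<ge> m" unfolding n_def using strict_mono_imp_increasing[OF sm] by simp
    then have n27: "real n \<ge> 27" using m27 by simp
    have "exp (3::real) = exp 1 ^ 3" by (simp flip: exp_of_nat_mult)
    also have "\<dots> \<le> 3 ^ 3" using exp_le by (intro power_mono) auto
    finally have "exp 3 \<le> real n" using n27 by simp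
    then have ln3: "ln (real n) \<ge> 3" using n27 ln_le_cancel_iff[of "exp 3" "real n"] by simp
    then have lnpos: "ln (real n) > 0" by simp
    have "ln (ln (real n)) \<ge> 1"
    proof -
      have "exp 1 \<le> ln (real n)" using exp_le ln3 by linarith
      then show ?thesis using lnpos ln_le_cancel_iff[of "exp 1" "ln (real n)"] by simp
    qed
    then have ll: "(ln (ln (real n)))\<^sup>2 \<ge> 1" by (simp add: one_le_power)
    have rb: "r \<le> bb r"
    proof -
      have "(s+2)*r \<ge> 3*r" using s1 by simp
      moreover have "r \<ge> 1" unfolding r_def by simp
      ultimately show ?thesis unfolding bb_def by linarith
    qed
    have lnb: "ln (real n) \<le> real (s+2) * r"
    proof -
      have "ln (real n) \<le> real (bb r)" unfolding n_def cardV r_def[symmetric]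
        by (rule ln_choose_le) (use rb r_def in auto)
      also have "\<dots> \<le> real ((s+2) * r)" unfolding bb_def by (simp only: of_nat_le_iff)
      also have "\<dots> = real (s+2) * r" by (simp only: of_nat_mult)
      finally show ?thesis .
    qed
    have dn: "real (d m) / real n \<le> real (s+1) / r"
      unfolding d_def n_def cardV r_def[symmetric] by (rule density) (use s1 r_def bb_def in auto)
    have "real (d m) / real n * ln (real n) \<le> real (s+1) / r * (real (s+2) * r)"
      using dn lnb lnpos by (intro mult_mono) auto
    also have "\<dots> = real ((s+1)*(s+2))"
    proof -
      have "real r \<noteq> 0" using r_def by simp
      then have "real (s+1) / r * (real (s+2) * r) = real (s+1) * real (s+2)" by simp
      then show ?thesis by (simp only: of_nat_mult)
    qed
    also have "\<dots> \<le> real ((s+1)*(s+2)) * (ln (ln (real n)))\<^sup>2"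
      using mult_left_mono[OF ll, of "real ((s+1)*(s+2))"] by simp
    finally show "real (d m) / real (card (V m))
       \<le> real ((s+1)*(s+2)) * (ln (ln (real (card (V m)))))\<^sup>2 / ln (real (card (V m)))"
      unfolding n_def[symmetric] using lnpos by (simp add: field_simps)
  qed
  show "\<exists>(V::nat \<Rightarrow> nat set) (E::nat \<Rightarrow> nat \<Rightarrow> nat \<Rightarrow> bool) (d::nat \<Rightarrow> nat).
               (\<forall>m. simple_graph (V m) (E m) \<and> regular (V m) (E m) (d m)
                     \<and> K_saturated (V m) (E m) (s + 2))
               \<and> strict_mono (\<lambda>m. card (V m))
               \<and> (\<exists>C::real. \<exists>M. \<forall>m\<ge>M.
                    real (d m) / real (card (V m))
                      \<le> C * (ln (ln (real (card (V m)))))\<^sup>2 / ln (real (card (V m))))"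
    using props sm bound by blast
qed

end
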